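(* For every $n\ge3$ and every integer $k$ with $1<k<n$ there exists a positive semidefinite $n\times n$ matrix of rank $k$ which is perfect copositive.
   Context: $\mathcal{S}^n$: real symmetric $n\times n$ matrices; $B[v]=v^\top Bv$; $\mathcal{COP}^n=\{B\in\mathcal{S}^n: B[x]\ge0\ \forall x\in\mathbb{R}^n_{\ge0}\}$; strictly copositive means lying in the interior of $\mathcal{COP}^n$. $\min_{\mathcal{COP}}B=\inf\{B[v]: v\in\mathbb{Z}^n_{\ge0}\setminus\{0\}\}$, $\operatorname{Min}_{\mathcal{COP}}B=\{v\in\mathbb{Z}^n_{\ge0}: B[v]=\min_{\mathcal{COP}}B\}$. A strictly copositive $P$ is perfect copositive if it is the unique $Q\in\mathcal{S}^n$ with $Q[v]=\min_{\mathcal{COP}}P$ for all $v\in\operatorname{Min}_{\mathcal{COP}}P$. *)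

theory Defs
  imports "HOL-Analysis.Analysis"
begin

definition sym_mat :: "real^'n^'n \<Rightarrow> bool" where
  "sym_mat B \<longleftrightarrow> transpose B = B"

definition qform :: "real^'n^'n \<Rightarrow> real^'n \<Rightarrow> real" where
  "qform B v = v \<bullet> (B *v v)"

definition nonneg_vec :: "real^'n \<Rightarrow> bool" where
  "nonneg_vec x \<longleftrightarrow> (\<forall>i. x $ i \<ge> 0)"

definition nonneg_int_vec :: "real^'n \<Rightarrow> bool" where
  "nonneg_int_vec v \<longleftrightarrow> (\<forall>i. v $ i \<in> \<int> \<and> v $ i \<ge> 0)"

definition copositive :: "real^'n^'n \<Rightarrow> bool" where
  "copositive B \<longleftrightarrow> sym_mat B \<and> (\<forall>x. nonneg_vec x \<longrightarrow> qform B x \<ge> 0)"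

text \<open>Interior of the copositive cone, taken within the space of symmetric matrices.\<close>
definition strictly_copositive :: "real^'n^'n \<Rightarrow> bool" where
  "strictly_copositive B \<longleftrightarrow> sym_mat B \<and>
     (\<exists>e>0. \<forall>Q. sym_mat Q \<and> norm (Q - B) < e \<longrightarrow> copositive Q)"

definition min_cop :: "real^'n^'n \<Rightarrow> real" where
  "min_cop B = Inf {qform B v | v. nonneg_int_vec v \<and> v \<noteq> 0}"

definition Min_cop :: "real^'n^'n \<Rightarrow> (real^'n) set" where
  "Min_cop B = {v. nonneg_int_vec v \<and> qform B v = min_cop B}"

definition perfect_copositive :: "real^'n^'n \<Rightarrow> bool" where
  "perfect_copositive P \<longleftrightarrow> strictly_copositive P \<and>
     (\<forall>Q. sym_mat Q \<longrightarrow> ((\<forall>v\<in>Min_cop P. qform Q v = min_cop P) \<longleftrightarrow> Q = P))"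

definition psd :: "real^'n^'n \<Rightarrow> bool" where
  "psd B \<longleftrightarrow> sym_mat B \<and> (\<forall>x. qform B x \<ge> 0)"

end

theory Submission
  imports Defs
begin


lemma sym_entry: "sym_mat D \<Longrightarrow> D $ i $ j = D $ j $ i"
  unfolding sym_mat_def by (metis transpose_def vec_lambda_beta)

definition bf :: "real^'n^'n \<Rightarrow> real^'n \<Rightarrow> real^'n \<Rightarrow> real" where
  "bf D u w = u \<bullet> (D *v w)"

lemma bf_sym: assumes "sym_mat D" shows "bf D w u = bf D u w"
proof -
  have "bf D w u = (\<Sum>a\<in>UNIV. \<Sum>b\<in>UNIV. w$a * D$a$b * u$b)"
    unfolding bf_def inner_vec_def matrix_vector_mult_def by (simp add: sum_distrib_left mult.assoc)
  also have "\<dots> = (\<Sum>b\<in>UNIV. \<Sum>a\<in>UNIV. w$a * D$a$b * u$b)" by (rule sum.swap)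
  also have "\<dots> = bf D u w"
    unfolding bf_def inner_vec_def matrix_vector_mult_def
    by (simp add: sum_distrib_left mult.assoc mult.commute mult.left_commute sym_entry[OF assms])
  finally show ?thesis .
qed

lemma qform_add: assumes "sym_mat D"
  shows "qform D (u + w) = qform D u + 2 * bf D u w + qform D w"
  using bf_sym[OF assms, of u w]
  unfolding qform_def bf_def by (simp add: matrix_vector_right_distrib inner_add_left inner_add_right)

lemma qform_scale: "qform D (c *\<^sub>R u) = c^2 * qform D u"
  unfolding qform_def by (simp add: matrix_vector_mult_scaleR power2_eq_square)

lemma qform_diff: "qform (Q - P) v = qform Q v - qform P v"
  unfolding qform_def by (simp add: matrix_vector_mult_diff_rdistrib inner_diff_right)

lemma bf_axis: "bf D (axis a 1) (axis b 1) = D $ a $ b"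
  unfolding bf_def by (simp add: inner_axis' matrix_vector_mult_basis column_def)



lemma qform_bound: fixes M :: "real^'n^'n"
  shows "\<bar>qform M u\<bar> \<le> real CARD('n) * real CARD('n) * norm M * (norm u)^2"
proof -
  have ent: "\<bar>M$i$j\<bar> \<le> norm M" for i j
  proof -
    have "\<bar>M$i$j\<bar> \<le> norm (M$i)" by (rule component_le_norm_cart)
    also have "\<dots> \<le> norm M" by (rule Finite_Cartesian_Product.norm_nth_le)
    finally show ?thesis .
  qed
  have "onorm ((*v) M) \<le> real CARD('n) * real CARD('n) * norm M"
    by (rule onorm_le_matrix_component[OF ent])
  moreover have "norm (M *v u) \<le> onorm ((*v) M) * norm u"
    using onorm[OF matrix_vector_mul_bounded_linear, of M u] by simp
  ultimately have "norm (M *v u) \<le> real CARD('n) * real CARD('n) * norm M * norm u"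
    by (meson mult_right_mono norm_ge_zero order_trans)
  moreover have "\<bar>qform M u\<bar> \<le> norm u * norm (M *v u)"
    unfolding qform_def by (rule Cauchy_Schwarz_ineq2)
  ultimately show ?thesis
    by (smt (verit, best) mult.commute mult_left_mono norm_ge_zero power2_eq_square mult.assoc)
qed

lemma strict_cop_crit:
  fixes P :: "real^'n^'n"
  assumes symP: "sym_mat P" and pos: "\<And>x. nonneg_vec x \<Longrightarrow> x \<noteq> 0 \<Longrightarrow> qform P x > 0"
  shows "strictly_copositive P"
proof -
  define K where "K = {x::real^'n. (\<forall>i. 0 \<le> x$i)} \<inter> sphere 0 1"
  have cl: "closed {x::real^'n. (\<forall>i. 0 \<le> x$i)}"
    by (intro closed_Collect_all closed_Collect_le continuous_intros)
  have "compact K" unfolding K_def using cl compact_sphere by (simp add: closed_Int_compact)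
  moreover obtain i0 :: 'n where True by simp
  have "axis i0 1 \<in> K" 
  proof -
    have "\<forall>i. 0 \<le> axis i0 (1::real) $ i" by (simp add: axis_def)
    thus ?thesis unfolding K_def by simp
  qed
  hence "K \<noteq> {}" by auto
  moreover have "continuous_on K (qform P)"
    unfolding qform_def by (intro continuous_intros)
  ultimately obtain x0 where x0: "x0 \<in> K" "\<And>y. y \<in> K \<Longrightarrow> qform P x0 \<le> qform P y"
    using continuous_attains_inf by metis
  define c where "c = qform P x0"
  have "c > 0" unfolding c_def using x0(1) pos unfolding K_def nonneg_vec_def by (metis IntD1 IntD2 mem_Collect_eq mem_sphere_0 norm_zero zero_neq_one)
  define N where "N = real CARD('n) * real CARD('n)"
  have N: "N > 0" unfolding N_def by simp
  show ?thesis unfolding strictly_copositive_def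
  proof (intro conjI symP exI[of _ "c / N"] allI impI)
    show "0 < c / N" using \<open>c>0\<close> N by simp
    fix Q :: "real^'n^'n" assume Q: "sym_mat Q \<and> norm (Q - P) < c / N"
    show "copositive Q" unfolding copositive_def
    proof (intro conjI allI impI)
      show "sym_mat Q" using Q by simp
      fix x :: "real^'n" assume nx: "nonneg_vec x"
      show "0 \<le> qform Q x"
      proof (cases "x = 0")
        case True thus ?thesis by (simp add: qform_def)
      next
        case False
        define u where "u = (1 / norm x) *\<^sub>R x"
        have xu: "x = norm x *\<^sub>R u" unfolding u_def using False by simp
        have uK: "u \<in> K" unfolding K_def u_def using nx False
          by (auto simp: nonneg_vec_def)
        have "\<bar>qform (Q - P) u\<bar> \<le> N * norm (Q - P) * (norm u)^2"
          unfolding N_def by (rule qform_bound)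
        also have "norm u = 1" using uK unfolding K_def by simp
        finally have "\<bar>qform (Q - P) u\<bar> \<le> N * norm (Q - P)" by simp
        also have "\<dots> \<le> c" using Q N by (simp add: field_simps)
        finally have "qform Q u \<ge> qform P u - c" unfolding qform_diff by linarith
        moreover have "qform P u \<ge> c" unfolding c_def using x0(2) uK by simp
        ultimately have "qform Q u \<ge> 0" by simp
        thus ?thesis by (subst xu, simp add: qform_scale)
      qed
    qed
  qed
qed



locale constr =
  fixes idx :: "nat \<Rightarrow> 'n::finite" and k N :: nat
  assumes bij: "bij_betw idx {..<N} (UNIV::'n set)"
    and k1: "1 < k" and kN: "k < N"
begin

definition TT :: "'n set" where "TT = idx ` {k-1..<N}"
definition tv :: "real^'n" where "tv = (\<chi> c. if c \<in> TT then 1 else 0)"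
definition av :: "nat \<Rightarrow> real^'n" where
 "av l = (if l = 0 \<or> k < l then 0 else if l < k then axis (idx (l-1)) 1 else tv - axis (idx (k-2)) 1)"
definition dv :: "nat \<Rightarrow> real^'n" where "dv l = av l - av (Suc l)"
definition PP :: "real^'n^'n" where "PP = (\<chi> a b. (\<Sum>l\<le>k. dv l $ a * dv l $ b) / 2)"
definition hv :: "nat \<Rightarrow> nat \<Rightarrow> real^'n" where
  "hv i j = (\<chi> c. if c \<in> idx ` {i..j} then 1 else 0)"

lemma inj_idx: "inj_on idx {..<N}" using bij bij_betw_def by blast

lemma idx_surj: "\<exists>m<N. c = idx m"
  using bij unfolding bij_betw_def by (metis UNIV_I imageE lessThan_iff)

lemma idx_eq: "a < N \<Longrightarrow> b < N \<Longrightarrow> idx a = idx b \<longleftrightarrow> a = b"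
  using inj_idx by (auto simp: inj_on_def)

lemma idx_TT: "m < N \<Longrightarrow> idx m \<in> TT \<longleftrightarrow> k - 1 \<le> m"
  unfolding TT_def using idx_eq by auto

lemma finite_TT: "finite TT" by simp

lemma tv_inner: "tv \<bullet> x = (\<Sum>c\<in>TT. x$c)"
proof -
  have "tv \<bullet> x = (\<Sum>i\<in>UNIV. if i \<in> TT then x$i else 0)"
    unfolding tv_def inner_vec_def by (rule sum.cong) auto
  also have "\<dots> = (\<Sum>c\<in>TT. x$c)" using sum.inter_restrict[of UNIV "\<lambda>c. x$c" TT] by simp
  finally show ?thesis .
qed

lemma av_inner: "av l \<bullet> x = (if l = 0 \<or> k < l then 0 else if l < k then x $ idx (l-1)
    else (\<Sum>c\<in>TT. x$c) - x $ idx (k-2))"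
proof (cases "l = 0 \<or> k < l")
  case True thus ?thesis by (simp add: av_def)
next
  case F: False
  show ?thesis
  proof (cases "l < k")
    case True thus ?thesis using F by (simp add: av_def inner_axis')
  next
    case False
    have lk: "l = k" using F False by linarith
    have "av k = tv - axis (idx (k-2)) 1" using k1 by (simp add: av_def)
    thus ?thesis unfolding lk using k1 by (simp add: tv_inner inner_axis' inner_diff_left)
  qed
qed

lemma dv_inner: "dv l \<bullet> x = av l \<bullet> x - av (Suc l) \<bullet> x"
  by (simp add: dv_def inner_diff_left)

lemma qform_expand: "qform D x = (\<Sum>a\<in>UNIV. \<Sum>b\<in>UNIV. x$a * D$a$b * x$b)"
  unfolding qform_def inner_vec_def matrix_vector_mult_def by (simp add: sum_distrib_left mult.assoc)

lemma qform_PP: "qform PP x = (\<Sum>l\<le>k. (dv l \<bullet> x)^2) / 2"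
proof -
  have sq: "(dv l \<bullet> x)^2 = (\<Sum>a\<in>UNIV. \<Sum>b\<in>UNIV. x$a * (dv l$a * dv l$b) * x$b)" for l
    by (simp add: power2_eq_square inner_vec_def sum_product mult_ac)
  have "(\<Sum>l\<le>k. (dv l \<bullet> x)^2) = (\<Sum>l\<le>k. \<Sum>a\<in>UNIV. \<Sum>b\<in>UNIV. x$a * (dv l$a * dv l$b) * x$b)"
    by (simp add: sq)
  also have "\<dots> = (\<Sum>a\<in>UNIV. \<Sum>l\<le>k. \<Sum>b\<in>UNIV. x$a * (dv l$a * dv l$b) * x$b)"
    by (rule sum.swap)
  also have "\<dots> = (\<Sum>a\<in>UNIV. \<Sum>b\<in>UNIV. \<Sum>l\<le>k. x$a * (dv l$a * dv l$b) * x$b)"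
    by (rule sum.cong[OF refl], rule sum.swap)
  also have "\<dots> = (\<Sum>a\<in>UNIV. \<Sum>b\<in>UNIV. x$a * (\<Sum>l\<le>k. dv l$a * dv l$b) * x$b)"
    by (simp add: sum_distrib_left sum_distrib_right)
  finally show ?thesis unfolding qform_expand PP_def
    by (simp add: sum_divide_distrib[symmetric] mult.assoc)
qed

lemma sym_PP: "sym_mat PP"
  unfolding sym_mat_def PP_def transpose_def by (simp add: vec_eq_iff mult.commute)

end


lemma int_sq_sum_ge2:
  fixes z :: "nat \<Rightarrow> real"
  assumes fin: "finite S" and ints: "\<And>l. l \<in> S \<Longrightarrow> z l \<in> \<int>" and s0: "sum z S = 0"
    and l0: "l0 \<in> S" "z l0 \<noteq> 0"
  shows "(\<Sum>l\<in>S. (z l)^2) \<ge> 2"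
proof -
  have ge: "(z l)^2 \<ge> \<bar>z l\<bar>" if "l \<in> S" for l
  proof (cases "z l = 0")
    case False
    hence "1 \<le> \<bar>z l\<bar>" using Ints_nonzero_abs_ge1 ints that by blast
    hence "\<bar>z l\<bar> * 1 \<le> \<bar>z l\<bar> * \<bar>z l\<bar>" by (intro mult_left_mono) auto
    thus ?thesis by (simp add: power2_eq_square)
  qed simp
  have one: "1 \<le> \<bar>z l0\<bar>" using Ints_nonzero_abs_ge1 ints l0 by blast
  have split: "sum z S = z l0 + sum z (S - {l0})" using fin l0 by (simp add: sum.remove)
  have "\<bar>z l0\<bar> = \<bar>sum z (S - {l0})\<bar>" using s0 split by simp
  also have "\<dots> \<le> (\<Sum>l\<in>S - {l0}. \<bar>z l\<bar>)" by (rule sum_abs)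
  finally have a: "\<bar>z l0\<bar> \<le> (\<Sum>l\<in>S - {l0}. \<bar>z l\<bar>)" .
  have "(\<Sum>l\<in>S. \<bar>z l\<bar>) = \<bar>z l0\<bar> + (\<Sum>l\<in>S - {l0}. \<bar>z l\<bar>)"
    using fin l0 by (simp add: sum.remove)
  hence "(\<Sum>l\<in>S. \<bar>z l\<bar>) \<ge> 2" using a one by linarith
  moreover have "(\<Sum>l\<in>S. (z l)^2) \<ge> (\<Sum>l\<in>S. \<bar>z l\<bar>)" by (rule sum_mono) (rule ge)
  ultimately show ?thesis by linarith
qed

context constr begin

lemma dv_sum: "(\<Sum>l\<le>k. dv l \<bullet> x) = 0"
proof -
  have "(\<Sum>l\<le>k. dv l \<bullet> x) = (\<Sum>l\<le>k. av l \<bullet> x - av (Suc l) \<bullet> x)" by (simp add: dv_inner)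
  also have "\<dots> = av 0 \<bullet> x - av (Suc k) \<bullet> x" by (rule sum_telescope)
  also have "\<dots> = 0" by (simp add: av_def)
  finally show ?thesis .
qed

lemma av_zero_all: assumes "\<And>l. l \<le> k \<Longrightarrow> dv l \<bullet> x = 0" shows "av l \<bullet> x = 0"
proof (induction l)
  case 0 thus ?case by (simp add: av_def)
next
  case (Suc l)
  show ?case
  proof (cases "l \<le> k")
    case True thus ?thesis using Suc assms[of l] by (simp add: dv_inner)
  next
    case False thus ?thesis by (simp add: av_def)
  qed
qed

lemma av_head: assumes "m < k - 1" shows "av (Suc m) \<bullet> x = x $ idx m"
proof -
  have "Suc m < k" using assms by linarith
  thus ?thesis by (simp add: av_inner)
qed

lemma av_k: "av k \<bullet> x = (\<Sum>c\<in>TT. x$c) - x $ idx (k-2)"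
  using k1 by (simp add: av_inner)

lemma nonneg_zero: assumes nn: "nonneg_vec x" and z: "\<And>l. av l \<bullet> x = 0" shows "x = 0"
proof -
  have h: "x $ idx m = 0" if "m < k - 1" for m using av_head[OF that, of x] z[of "Suc m"] by simp
  have "x $ idx (k-2) = 0" using h k1 by simp
  hence "(\<Sum>c\<in>TT. x$c) = 0" using av_k[of x] z[of k] by simp
  hence t: "\<forall>c\<in>TT. x$c = 0" using sum_nonneg_eq_0_iff[OF finite_TT] nn unfolding nonneg_vec_def by auto
  show ?thesis
  unfolding vec_eq_iff
  proof
    fix c obtain m where m: "m < N" "c = idx m" using idx_surj by blast
    show "x $ c = 0 $ c"
    proof (cases "m < k - 1")
      case True thus ?thesis using h m by simp
    next
      case False hence "c \<in> TT" using idx_TT m by simp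
      thus ?thesis using t by simp
    qed
  qed
qed

lemma PP_pos: assumes "nonneg_vec x" "x \<noteq> 0" shows "qform PP x > 0"
proof -
  have ge: "qform PP x \<ge> 0" unfolding qform_PP by (simp add: sum_nonneg)
  have "qform PP x \<noteq> 0"
  proof
    assume "qform PP x = 0"
    hence "(\<Sum>l\<le>k. (dv l \<bullet> x)^2) = 0" unfolding qform_PP by simp
    hence "\<forall>l\<in>{..k}. (dv l \<bullet> x)^2 = 0" by (subst sum_nonneg_eq_0_iff[symmetric]) auto
    hence "\<And>l. l \<le> k \<Longrightarrow> dv l \<bullet> x = 0" by simp
    hence "\<And>l. av l \<bullet> x = 0" by (rule av_zero_all)
    hence "x = 0" using nonneg_zero assms(1) by blast
    thus False using assms(2) by simp
  qed
  thus ?thesis using ge by simp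
qed

lemma PP_ge1: assumes v: "nonneg_int_vec v" "v \<noteq> 0" shows "qform PP v \<ge> 1"
proof -
  have vi: "v $ c \<in> \<int>" for c using v unfolding nonneg_int_vec_def by simp
  have nn: "nonneg_vec v" using v unfolding nonneg_int_vec_def nonneg_vec_def by simp
  have avI: "av l \<bullet> v \<in> \<int>" for l unfolding av_inner using vi by (auto intro: Ints_diff Ints_sum)
  have dI: "dv l \<bullet> v \<in> \<int>" for l unfolding dv_inner using avI by (simp add: Ints_diff)
  obtain l0 where l0: "l0 \<le> k" "dv l0 \<bullet> v \<noteq> 0"
  proof (rule ccontr)
    assume "\<not> thesis"
    hence "\<And>l. l \<le> k \<Longrightarrow> dv l \<bullet> v = 0" using that by blast
    hence "\<And>l. av l \<bullet> v = 0" by (rule av_zero_all)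
    thus False using nonneg_zero nn v(2) by blast
  qed
  have "(\<Sum>l\<in>{..k}. (dv l \<bullet> v)^2) \<ge> 2"
    by (rule int_sq_sum_ge2[of "{..k}" "\<lambda>l. dv l \<bullet> v" l0]) (use dI dv_sum l0 in auto)
  thus ?thesis unfolding qform_PP by simp
qed

lemma qform_interval:
  assumes "1 \<le> i" "i \<le> j" "j \<le> k" and a: "\<And>l. av l \<bullet> x = (if i \<le> l \<and> l \<le> j then 1 else 0)"
  shows "qform PP x = 1"
proof -
  have "(dv l \<bullet> x)^2 = (if l = i - 1 then 1 else 0) + (if l = j then 1 else 0)" for l
    unfolding dv_inner a using assms(1,2) by auto
  hence "(\<Sum>l\<le>k. (dv l \<bullet> x)^2) = (\<Sum>l\<le>k. (if l = i - 1 then 1 else 0)) + (\<Sum>l\<le>k. (if l = j then (1::real) else 0))"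
    by (simp add: sum.distrib)
  also have "\<dots> = 2" using assms by simp
  finally show ?thesis unfolding qform_PP by simp
qed

end


context constr begin

lemma hv_nth: assumes "m < N" "j < N" shows "hv i j $ idx m = (if i \<le> m \<and> m \<le> j then 1 else 0)"
proof -
  have "idx m \<in> idx ` {i..j} \<longleftrightarrow> m \<in> {i..j}"
    by (rule inj_on_image_mem_iff[OF inj_idx]) (use assms in auto)
  thus ?thesis unfolding hv_def by simp
qed

lemma hv_TT: assumes "j \<le> k - 2" "c \<in> TT" shows "hv i j $ c = 0"
proof -
  obtain m where m: "m < N" "c = idx m" using idx_surj by blast
  have "k - 1 \<le> m" using idx_TT m assms(2) by simp
  moreover have "j < N" using assms kN by linarith
  ultimately have "\<not> m \<le> j" using assms k1 by linarith
  thus ?thesis using hv_nth m \<open>j < N\<close> by simp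
qed

lemma hv_empty: "j < i \<Longrightarrow> hv i j = 0"
  unfolding hv_def by (simp add: vec_eq_iff)

lemma hv_split: assumes "i \<le> j" "j < N" shows "hv i j = axis (idx i) 1 + hv (Suc i) j"
  unfolding vec_eq_iff
proof
  fix c obtain m where m: "m < N" "c = idx m" using idx_surj by blast
  have "i < N" using assms by simp
  hence ax: "axis (idx i) 1 $ idx m = (if m = i then 1 else 0)" using idx_eq m by (simp add: axis_def)
  show "hv i j $ c = (axis (idx i) 1 + hv (Suc i) j) $ c"
    unfolding m(2) using m assms by (simp add: hv_nth ax)
qed

lemma av_hw: assumes j: "j \<le> k - 2" and w: "\<And>c. c \<notin> TT \<Longrightarrow> w$c = 0"
  shows "av l \<bullet> (hv i j + w) = (if l = 0 \<or> k < l then 0 else if l < k then (if i \<le> l-1 \<and> l-1 \<le> j then 1 else 0)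
     else (\<Sum>c\<in>TT. w$c) - (if i \<le> k-2 \<and> k-2 \<le> j then 1 else 0))"
proof -
  have jN: "j < N" using j kN by linarith
  have h1: "(hv i j + w) $ idx (l-1) = (if i \<le> l-1 \<and> l-1 \<le> j then 1 else 0)" if "l < k" "l \<noteq> 0" for l
  proof -
    have "l - 1 < N" using that kN by linarith
    moreover have "idx (l-1) \<notin> TT" using idx_TT that \<open>l - 1 < N\<close> by simp
    ultimately show ?thesis using hv_nth[OF _ jN] w by simp
  qed
  have h2: "(\<Sum>c\<in>TT. hv i j $ c + w $ c) = (\<Sum>c\<in>TT. w$c)"
    by (rule sum.cong) (simp_all add: hv_TT[OF j])
  show ?thesis
  proof (cases "l = 0 \<or> k < l")
    case True thus ?thesis by (simp add: av_inner)
  next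
    case F: False
    show ?thesis
    proof (cases "l < k")
      case True thus ?thesis using F h1 by (simp add: av_inner)
    next
      case False
      have lk: "l = k" using F False by linarith
      have "(hv i j + w) $ idx (k-2) = (if i \<le> k-2 \<and> k-2 \<le> j then 1 else 0)"
        using h1[of "k-1"] k1 by (simp add: numeral_2_eq_2)
      thus ?thesis unfolding lk using k1 by (simp add: av_k h2)
    qed
  qed
qed

lemma sum_axis_TT: "t \<in> TT \<Longrightarrow> (\<Sum>c\<in>TT. axis t (1::real) $ c) = 1"
  by (simp add: axis_def)

lemma axis_TT: "t \<in> TT \<Longrightarrow> c \<notin> TT \<Longrightarrow> axis t (1::real) $ c = 0"
  by (auto simp: axis_def)

lemma minA: assumes "i \<le> j" "j < k - 2" shows "qform PP (hv i j) = 1"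
proof -
  have "av l \<bullet> (hv i j + 0) = (if Suc i \<le> l \<and> l \<le> Suc j then 1 else 0)" for l
    using assms by (subst av_hw) auto
  thus ?thesis using assms by (intro qform_interval[of "Suc i" "Suc j"]) auto
qed

lemma minB: assumes "i \<le> k - 2" "t \<in> TT" shows "qform PP (hv i (k-2) + axis t 1) = 1"
proof -
  have s: "(\<Sum>c\<in>TT. axis t 1 $ c) = (1::real)" using assms sum_axis_TT by simp
  have "av l \<bullet> (hv i (k-2) + axis t 1) = (if Suc i \<le> l \<and> l \<le> k - 1 then 1 else 0)" for l
    using assms k1 s by (subst av_hw) (auto simp: axis_TT)
  thus ?thesis using assms k1 by (intro qform_interval[of "Suc i" "k-1"]) auto
qed

lemma minC: assumes "i \<le> k - 2" "t \<in> TT" "u \<in> TT" shows "qform PP (hv i (k-2) + (axis t 1 + axis u 1)) = 1"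
proof -
  have s: "(\<Sum>c\<in>TT. (axis t 1 + axis u 1) $ c) = (2::real)"
    using assms sum_axis_TT by (simp add: sum.distrib)
  have "av l \<bullet> (hv i (k-2) + (axis t 1 + axis u 1)) = (if Suc i \<le> l \<and> l \<le> k then 1 else 0)" for l
    using assms k1 s by (subst av_hw) (auto simp: axis_TT)
  thus ?thesis using assms k1 by (intro qform_interval[of "Suc i" "k"]) auto
qed

lemma minD: assumes "t \<in> TT" shows "qform PP (axis t 1) = 1"
proof -
  have "av l \<bullet> (hv 1 0 + axis t 1) = (if k \<le> l \<and> l \<le> k then 1 else 0)" for l
    using assms k1 by (subst av_hw) (auto simp: axis_TT sum_axis_TT)
  hence "av l \<bullet> axis t 1 = (if k \<le> l \<and> l \<le> k then 1 else 0)" for l by (simp add: hv_empty)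
  thus ?thesis using k1 by (intro qform_interval[of k k]) auto
qed

end


context constr begin

lemma qform_ind: fixes D :: "real^'n^'n" and I :: "'n set"
  shows "qform D (\<chi> c. if c \<in> I then 1 else 0) = (\<Sum>a\<in>I. \<Sum>b\<in>I. D$a$b)"
proof -
  have "qform D (\<chi> c. if c \<in> I then 1 else 0) =
     (\<Sum>a\<in>UNIV. if a \<in> I then (\<Sum>b\<in>UNIV. if b \<in> I then D$a$b else 0) else 0)"
    unfolding qform_expand by (rule sum.cong[OF refl]) (auto intro!: sum.cong)
  also have "\<dots> = (\<Sum>a\<in>UNIV. if a \<in> I then (\<Sum>b\<in>I. D$a$b) else 0)"
  proof (rule sum.cong[OF refl])
    fix a
    show "(if a \<in> I then (\<Sum>b\<in>UNIV. if b \<in> I then D$a$b else 0) else 0) = (if a \<in> I then (\<Sum>b\<in>I. D$a$b) else 0)"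
      using sum.inter_restrict[of UNIV "\<lambda>b. D$a$b" I] by simp
  qed
  also have "\<dots> = (\<Sum>a\<in>I. \<Sum>b\<in>I. D$a$b)"
    using sum.inter_restrict[of UNIV "\<lambda>a. (\<Sum>b\<in>I. D$a$b)" I] by simp
  finally show ?thesis .
qed

lemma qform_hv: assumes "j < N" shows "qform D (hv i j) = (\<Sum>a\<in>{i..j}. \<Sum>b\<in>{i..j}. D $ idx a $ idx b)"
proof -
  have inj: "inj_on idx {i..j}" by (rule inj_on_subset[OF inj_idx]) (use assms in auto)
  show ?thesis unfolding hv_def qform_ind
    by (simp add: sum.reindex[OF inj])
qed

lemma interval_zero:
  assumes sD: "sym_mat D" and z: "\<And>i j. i \<le> j \<Longrightarrow> j \<le> k - 2 \<Longrightarrow> qform D (hv i j) = 0"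
  shows "\<forall>i j. i \<le> j \<longrightarrow> j \<le> k - 2 \<longrightarrow> j - i = d \<longrightarrow> D $ idx i $ idx j = 0"
proof (induction d rule: less_induct)
  case (less d)
  show ?case
  proof (intro allI impI)
    fix i j assume ij: "i \<le> j" "j \<le> k - 2" "j - i = d"
    have jN: "j < N" using ij kN by linarith
    define E where "E a b = D $ idx a $ idx b" for a b
    have Es: "E a b = E b a" for a b unfolding E_def using sym_entry[OF sD] by simp
    have G: "(\<Sum>a\<in>{i..j}. \<Sum>b\<in>{i..j}. E a b) = 0"
      using z[OF ij(1,2)] qform_hv[OF jN] unfolding E_def by simp
    show "D $ idx i $ idx j = 0"
    proof (cases "i = j")
      case True thus ?thesis using G unfolding E_def by simp
    next
      case ne: False
      have other: "E a b = (if a = i \<and> b = j then E i j else if a = j \<and> b = i then E j i else 0)"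
        if "a \<in> {i..j}" "b \<in> {i..j}" for a b
      proof -
        have "E a b = 0" if "\<not> (a = i \<and> b = j)" "\<not> (a = j \<and> b = i)"
        proof (cases "a \<le> b")
          case True
          have "b - a < d" using that \<open>a \<in> {i..j}\<close> \<open>b \<in> {i..j}\<close> ij True by auto
          thus ?thesis using less[of "b - a"] True \<open>b \<in> {i..j}\<close> ij unfolding E_def by auto
        next
          case False
          have "a - b < d" using that \<open>a \<in> {i..j}\<close> \<open>b \<in> {i..j}\<close> ij False by auto
          hence "D $ idx b $ idx a = 0" using less[of "a - b"] False \<open>a \<in> {i..j}\<close> ij by auto
          thus ?thesis using Es unfolding E_def by metis
        qed
        thus ?thesis by auto
      qed
      have "(\<Sum>a\<in>{i..j}. \<Sum>b\<in>{i..j}. E a b) =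
            (\<Sum>a\<in>{i..j}. \<Sum>b\<in>{i..j}. (if a = i \<and> b = j then E i j else if a = j \<and> b = i then E j i else 0))"
        by (intro sum.cong refl other)
      also have "\<dots> = (\<Sum>a\<in>{i..j}. (if a = i then E i j else 0) + (if a = j then E j i else 0))"
      proof (rule sum.cong[OF refl])
        fix a assume a: "a \<in> {i..j}"
        show "(\<Sum>b\<in>{i..j}. (if a = i \<and> b = j then E i j else if a = j \<and> b = i then E j i else 0))
              = (if a = i then E i j else 0) + (if a = j then E j i else 0)"
        proof (cases "a = i")
          case True
          hence aj: "a \<noteq> j" using ne by simp
          have "(\<Sum>b\<in>{i..j}. (if a = i \<and> b = j then E i j else if a = j \<and> b = i then E j i else 0))
               = (\<Sum>b\<in>{i..j}. if b = j then E i j else 0)" using True aj by (intro sum.cong) auto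
          also have "\<dots> = E i j" using ij by simp
          finally show ?thesis using True aj by simp
        next
          case ai: False
          show ?thesis
          proof (cases "a = j")
            case True
            have "(\<Sum>b\<in>{i..j}. (if a = i \<and> b = j then E i j else if a = j \<and> b = i then E j i else 0))
                 = (\<Sum>b\<in>{i..j}. if b = i then E j i else 0)" using True ai by (intro sum.cong) auto
            also have "\<dots> = E j i" using ij by simp
            finally show ?thesis using True ai by simp
          next
            case False
            thus ?thesis using ai by simp
          qed
        qed
      qed
      also have "\<dots> = E i j + E j i" using ij by (simp add: sum.distrib)
      finally have "E i j + E j i = 0" using G by simp
      thus ?thesis using Es unfolding E_def by simp
    qed
  qed
qed

end


lemma bf_addL: "bf D (u + w) x = bf D u x + bf D w x"
  unfolding bf_def by (simp add: inner_add_left)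
lemma bf_addR: "bf D x (u + w) = bf D x u + bf D x w"
  unfolding bf_def by (simp add: matrix_vector_right_distrib inner_add_right)
lemma bf_zeroL: "bf D 0 x = 0" unfolding bf_def by simp
lemma qform_bf: "qform D u = bf D u u" unfolding qform_def bf_def by simp

lemma nniv_add: "nonneg_int_vec u \<Longrightarrow> nonneg_int_vec w \<Longrightarrow> nonneg_int_vec (u + w)"
  unfolding nonneg_int_vec_def by auto
lemma nniv_axis: "nonneg_int_vec (axis t (1::real))"
  unfolding nonneg_int_vec_def by (simp add: axis_def)

context constr begin

lemma nniv_hv: "nonneg_int_vec (hv i j)"
  unfolding nonneg_int_vec_def hv_def by simp

lemma t0: "idx (k-1) \<in> TT"
  using idx_TT kN by simp

lemma min_cop_PP: "min_cop PP = 1"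
  unfolding min_cop_def
proof (rule cInf_eq_minimum)
  have a: "axis (idx (k-1)) (1::real) \<noteq> 0" by simp
  show "1 \<in> {qform PP v |v. nonneg_int_vec v \<and> v \<noteq> 0}"
    by (rule CollectI, rule exI[of _ "axis (idx (k-1)) 1"]) (use minD[OF t0] nniv_axis a in simp)
next
  fix x assume "x \<in> {qform PP v |v. nonneg_int_vec v \<and> v \<noteq> 0}"
  thus "1 \<le> x" using PP_ge1 by auto
qed

lemma mem_Min: "nonneg_int_vec v \<Longrightarrow> qform PP v = 1 \<Longrightarrow> v \<in> Min_cop PP"
  unfolding Min_cop_def min_cop_PP by simp

lemma PP_perfect: "perfect_copositive PP"
  unfolding perfect_copositive_def
proof (intro conjI allI impI)
  show "strictly_copositive PP" by (rule strict_cop_crit[OF sym_PP PP_pos])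
  fix Q :: "real^'n^'n" assume sQ: "sym_mat Q"
  show "(\<forall>v\<in>Min_cop PP. qform Q v = min_cop PP) = (Q = PP)"
  proof
    assume "Q = PP" thus "\<forall>v\<in>Min_cop PP. qform Q v = min_cop PP" by (simp add: Min_cop_def)
  next
    assume H: "\<forall>v\<in>Min_cop PP. qform Q v = min_cop PP"
    define D where "D = Q - PP"
    have sD: "sym_mat D" unfolding sym_mat_def transpose_def vec_eq_iff D_def
      using sym_entry[OF sQ] sym_entry[OF sym_PP] by simp
    have Z: "qform D v = 0" if "nonneg_int_vec v" "qform PP v = 1" for v
      using H mem_Min[OF that] that(2) unfolding D_def qform_diff min_cop_PP by simp
    have bs: "bf D u w = bf D w u" for u w using bf_sym[OF sD] by simp
    have Dtt: "D $ t $ t = 0" if "t \<in> TT" for t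
      using Z[OF nniv_axis minD[OF that]] by (simp add: qform_bf bf_axis)
    have step2: "qform D (hv i (k-2)) = 0 \<and> bf D (hv i (k-2)) (axis t 1) = 0"
      if i: "i \<le> k - 2" and t: "t \<in> TT" for i t
    proof -
      define X where "X = hv i (k-2)"
      define e where "e = axis t (1::real)"
      have z1: "qform D (X + e) = 0"
        unfolding X_def e_def by (rule Z[OF nniv_add[OF nniv_hv nniv_axis] minB[OF i t]])
      have z2: "qform D (X + (e + e)) = 0"
        unfolding X_def e_def by (rule Z[OF nniv_add[OF nniv_hv nniv_add[OF nniv_axis nniv_axis]] minC[OF i t t]])
      have ee: "bf D e e = 0" unfolding e_def bf_axis using Dtt[OF t] .
      have "bf D X X + 2 * bf D X e = 0" using z1 ee bs[of e X]
        unfolding qform_bf bf_addL bf_addR by simp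
      moreover have "bf D X X + 4 * bf D X e = 0" using z2 ee bs[of e X]
        unfolding qform_bf bf_addL bf_addR by simp
      ultimately show ?thesis unfolding X_def e_def qform_bf by simp
    qed
    have ht: "D $ idx m $ t = 0" if m: "m \<le> k - 2" and t: "t \<in> TT" for m t
    proof -
      have kN2: "k - 2 < N" using kN by linarith
      have sp: "hv m (k-2) = axis (idx m) 1 + hv (Suc m) (k-2)" by (rule hv_split[OF m kN2])
      have "bf D (hv (Suc m) (k-2)) (axis t 1) = 0"
      proof (cases "Suc m \<le> k - 2")
        case True thus ?thesis using step2[OF True t] by simp
      next
        case False thus ?thesis by (simp add: hv_empty bf_zeroL)
      qed
      moreover have "bf D (hv m (k-2)) (axis t 1) = 0" using step2[OF m t] by simp
      ultimately show ?thesis unfolding sp bf_addL bf_axis by simp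
    qed
    have tt: "D $ t $ u = 0" if t: "t \<in> TT" and u: "u \<in> TT" for t u
    proof -
      define X where "X = hv 0 (k-2)"
      have z: "qform D (X + (axis t 1 + axis u 1)) = 0"
        unfolding X_def by (rule Z[OF nniv_add[OF nniv_hv nniv_add[OF nniv_axis nniv_axis]] minC[OF _ t u]]) simp
      have s: "qform D X = 0" "bf D X (axis t 1) = 0" "bf D X (axis u 1) = 0"
        using step2[OF zero_le t] step2[OF zero_le u] unfolding X_def by simp_all
      have "bf D (X + (axis t 1 + axis u 1)) (X + (axis t 1 + axis u 1)) = 0" using z unfolding qform_bf .
      hence "bf D X X + bf D X (axis t 1) + bf D X (axis u 1) + bf D (axis t 1) X + D$t$t + D$t$u
             + bf D (axis u 1) X + D$u$t + D$u$u = 0"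
        unfolding bf_addL bf_addR bf_axis by simp
      moreover have "bf D (axis t 1) X = 0" "bf D (axis u 1) X = 0"
        using s(2,3) bs[of "axis t 1" X] bs[of "axis u 1" X] by simp_all
      moreover have "D$u$t = D$t$u" using sym_entry[OF sD] .
      ultimately show ?thesis using s qform_bf[of D X] Dtt[OF t] Dtt[OF u] by simp
    qed
    have hh: "qform D (hv i j) = 0" if "i \<le> j" "j \<le> k - 2" for i j
    proof (cases "j < k - 2")
      case True thus ?thesis using Z[OF nniv_hv minA[OF that(1) True]] by simp
    next
      case False hence "j = k - 2" using that by simp
      thus ?thesis using step2[of i "idx (k-1)"] t0 that by simp
    qed
    have hd: "D $ idx a $ idx b = 0" if "a \<le> k - 2" "b \<le> k - 2" for a b
    proof (cases "a \<le> b")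
      case True thus ?thesis using interval_zero[OF sD hh, of "b - a", rule_format, of a b] that by simp
    next
      case False
      hence "D $ idx b $ idx a = 0" using interval_zero[OF sD hh, of "a - b", rule_format, of b a] that by simp
      thus ?thesis using sym_entry[OF sD] by metis
    qed
    have all: "D $ c $ d = 0" for c d
    proof -
      obtain m where m: "m < N" "c = idx m" using idx_surj by blast
      obtain m' where m': "m' < N" "d = idx m'" using idx_surj by blast
      show ?thesis
      proof (cases "m \<le> k - 2")
        case True
        show ?thesis
        proof (cases "m' \<le> k - 2")
          case True thus ?thesis using hd \<open>m \<le> k - 2\<close> m m' by simp
        next
          case False hence "d \<in> TT" using idx_TT m' k1 by simp
          thus ?thesis using ht \<open>m \<le> k - 2\<close> m by simp
        qed
      next
        case False hence cT: "c \<in> TT" using idx_TT m k1 by simp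
        show ?thesis
        proof (cases "m' \<le> k - 2")
          case True
          hence "D $ d $ c = 0" using ht cT m' by simp
          thus ?thesis using sym_entry[OF sD] by metis
        next
          case False hence "d \<in> TT" using idx_TT m' k1 by simp
          thus ?thesis using tt cT by simp
        qed
      qed
    qed
    show "Q = PP" unfolding vec_eq_iff using all unfolding D_def by simp
  qed
qed

end


context constr begin

lemma PP_mult: "PP *v x = (\<Sum>l\<le>k. ((dv l \<bullet> x) / 2) *\<^sub>R dv l)"
  unfolding vec_eq_iff
proof
  fix a
  have "(PP *v x) $ a = (\<Sum>b\<in>UNIV. ((\<Sum>l\<le>k. dv l $ a * dv l $ b) / 2) * x $ b)"
    by (simp add: PP_def matrix_vector_mult_def)
  also have "\<dots> = (\<Sum>b\<in>UNIV. \<Sum>l\<le>k. dv l $ a * dv l $ b * x $ b / 2)"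
    by (simp add: sum_divide_distrib sum_distrib_right)
  also have "\<dots> = (\<Sum>l\<le>k. \<Sum>b\<in>UNIV. dv l $ a * dv l $ b * x $ b / 2)" by (rule sum.swap)
  also have "\<dots> = (\<Sum>l\<le>k. ((dv l \<bullet> x) / 2) * dv l $ a)"
    by (simp add: inner_vec_def sum_divide_distrib sum_distrib_left sum_distrib_right mult_ac)
  finally show "(PP *v x) $ a = (\<Sum>l\<le>k. ((dv l \<bullet> x) / 2) *\<^sub>R dv l) $ a" by simp
qed

definition BB :: "(real^'n) set" where "BB = (\<lambda>m. axis (idx m) 1) ` {..<k-1} \<union> {tv}"

lemma tv_nth: "tv $ c = (if c \<in> TT then 1 else 0)" by (simp add: tv_def)

lemma head_notTT: "m < k - 1 \<Longrightarrow> idx m \<notin> TT"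
  using idx_TT kN by simp

lemma tv_head: "m < k - 1 \<Longrightarrow> tv \<bullet> axis (idx m) 1 = 0"
  using head_notTT by (simp add: inner_axis tv_nth)

lemma BB_orth: "pairwise orthogonal BB"
  unfolding pairwise_def BB_def orthogonal_def
proof (intro ballI impI)
  fix x y assume x: "x \<in> (\<lambda>m. axis (idx m) 1) ` {..<k-1} \<union> {tv}" and y: "y \<in> (\<lambda>m. axis (idx m) 1) ` {..<k-1} \<union> {tv}" and ne: "x \<noteq> y"
  show "x \<bullet> y = 0"
    using x y ne tv_head by (auto simp: inner_axis_axis inner_commute)
qed

lemma tv_ne0: "tv \<noteq> 0"
proof
  assume "tv = 0"
  hence "tv $ idx (k-1) = 0" by simp
  thus False using t0 tv_nth by simp
qed

lemma BB_0: "0 \<notin> BB" unfolding BB_def using tv_ne0 by auto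

lemma BB_ind: "independent BB" by (rule pairwise_orthogonal_independent[OF BB_orth BB_0])

lemma BB_card: "card BB = k"
proof -
  have inj: "inj_on (\<lambda>m. axis (idx m) (1::real)) {..<k-1}"
    unfolding inj_on_def using idx_eq kN by (auto simp: axis_eq_axis)
  have "tv \<notin> (\<lambda>m. axis (idx m) 1) ` {..<k-1}"
  proof
    assume "tv \<in> (\<lambda>m. axis (idx m) 1) ` {..<k-1}"
    then obtain m where m: "m < k - 1" "tv = axis (idx m) 1" by auto
    have "tv \<bullet> tv = tv \<bullet> axis (idx m) 1" using m(2) by (simp only:)
    hence "tv \<bullet> tv = 0" using tv_head[OF m(1)] by simp
    thus False using tv_ne0 by simp
  qed
  hence "card BB = Suc (card ((\<lambda>m. axis (idx m) (1::real)) ` {..<k-1}))"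
    unfolding BB_def by simp
  also have "\<dots> = k" using card_image[OF inj] k1 by simp
  finally show ?thesis .
qed

lemma dv_span: "dv l \<in> span BB"
proof -
  have "av l \<in> span BB" for l
  proof -
    have "axis (idx (l-1)) 1 \<in> span BB" if "0 < l" "l < k" using that
      unfolding BB_def by (intro span_base) auto
    moreover have "tv \<in> span BB" unfolding BB_def by (intro span_base) auto
    moreover have "axis (idx (k-2)) 1 \<in> span BB" using k1
      unfolding BB_def by (intro span_base) auto
    ultimately show ?thesis unfolding av_def by (auto intro: span_diff span_zero)
  qed
  thus ?thesis unfolding dv_def by (intro span_diff)
qed

lemma PP_kernel: assumes x: "x \<in> span BB" and z: "PP *v x = 0" shows "x = 0"
proof -
  have "qform PP x = 0" using z by (simp add: qform_def)
  hence "(\<Sum>l\<le>k. (dv l \<bullet> x)^2) = 0" unfolding qform_PP by simp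
  hence "\<forall>l\<in>{..k}. (dv l \<bullet> x)^2 = 0" by (subst sum_nonneg_eq_0_iff[symmetric]) auto
  hence "\<And>l. l \<le> k \<Longrightarrow> dv l \<bullet> x = 0" by simp
  hence av0: "\<And>l. av l \<bullet> x = 0" by (rule av_zero_all)
  have h: "x $ idx m = 0" if "m < k - 1" for m using av_head[OF that, of x] av0[of "Suc m"] by simp
  have "x $ idx (k-2) = 0" using h k1 by simp
  hence tvx: "tv \<bullet> x = 0" using av_k[of x] av0[of k] tv_inner by simp
  have "orthogonal x x"
  proof (rule orthogonal_to_span[OF x])
    fix y assume "y \<in> BB"
    thus "orthogonal x y" unfolding BB_def orthogonal_def
      using h tvx by (auto simp: inner_axis inner_commute)
  qed
  thus ?thesis by (simp add: orthogonal_def)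
qed

lemma PP_rank: "rank PP = k"
proof -
  have R: "range (\<lambda>x. PP *v x) \<subseteq> span BB"
  proof
    fix y assume "y \<in> range (\<lambda>x. PP *v x)"
    then obtain x where y: "y = PP *v x" by auto
    show "y \<in> span BB" unfolding y PP_mult
      by (intro span_sum span_mul dv_span) 
  qed
  have "dim (range (\<lambda>x. PP *v x)) \<le> dim (span BB)" by (rule dim_subset[OF R])
  also have "\<dots> = k" using dim_span_eq_card_independent[OF BB_ind] BB_card by simp
  finally have le: "dim (range (\<lambda>x. PP *v x)) \<le> k" .
  have inj: "inj_on ((*v) PP) (span BB)"
  proof (rule inj_onI)
    fix x y assume "x \<in> span BB" "y \<in> span BB" "PP *v x = PP *v y"
    hence d: "x - y \<in> span BB" "PP *v (x - y) = 0"
      by (auto simp: span_diff matrix_vector_mult_diff_distrib)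
    have "x - y = 0" by (rule PP_kernel[OF d])
    thus "x = y" by simp
  qed
  have ind: "independent ((*v) PP ` BB)"
    by (rule linear_independent_injective_image[OF matrix_vector_mul_linear BB_ind inj])
  have "card ((*v) PP ` BB) = k"
    using card_image[OF inj_on_subset[OF inj span_superset]] BB_card by simp
  moreover have "card ((*v) PP ` BB) \<le> dim (range (\<lambda>x. PP *v x))"
    by (rule independent_card_le_dim[OF _ ind]) auto
  ultimately show ?thesis unfolding rank_dim_range using le by simp
qed

lemma PP_psd: "psd PP"
  unfolding psd_def using sym_PP by (simp add: qform_PP sum_nonneg)

end

theorem corollary5p4:
  fixes k :: nat
  assumes "CARD('n::finite) \<ge> 3" and "1 < k" and "k < CARD('n)"
  shows "\<exists>P :: real^'n^'n. psd P \<and> rank P = k \<and> perfect_copositive P"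
proof -
  obtain idx where b: "bij_betw idx {0..<card (UNIV::'n set)} (UNIV::'n set)"
    using ex_bij_betw_nat_finite[of "UNIV::'n set"] by auto
  interpret c: constr idx k "CARD('n)"
    by unfold_locales (use b assms in \<open>auto simp: atLeast0LessThan\<close>)
  show ?thesis using c.PP_psd c.PP_rank c.PP_perfect by blast
qed

end
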